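(* Let $A\in\mathbb{R}^{m\times N}$, let $x\in\mathbb{R}^N$ be a nonzero $k$-sparse vector and $q\in(1,\infty]$. If $\rho_{q,3^{q/(q-1)}k}(A)>0$, then the unique solution of $\min_{z\in\mathbb{R}^N\setminus\{0\}}\lVert z\rVert_1/\lVert z\rVert_q$ subject to $Az=Ax$ is $x$.
   Context: For nonzero $z\in\mathbb{R}^N$ and $q\in(1,\infty)$, $s_q(z)=\left(\lVert z\rVert_1/\lVert z\rVert_q\right)^{q/(q-1)}$, and $s_\infty(z)=\lVert z\rVert_1/\lVert z\rVert_\infty$. For real $s\ge1$, $\rho_{q,s}(A)=\min\{\lVert Az\rVert_2/\lVert z\rVert_q: z\ne0,\ s_q(z)\le s\}$. For $q=\infty$ interpret $q/(q-1)=1$. A vector is $k$-sparse if it has at most $k$ nonzero entries. *)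

theory Defs
  imports "HOL-Analysis.Analysis"
begin

text \<open>The exponent q ranges over (1,\<infinity>]; we model it as an extended real.\<close>

definition lq_norm :: "ereal \<Rightarrow> real ^ 'n \<Rightarrow> real" where
  "lq_norm q z = (case q of
       ereal r \<Rightarrow> (\<Sum>i\<in>UNIV. \<bar>z $ i\<bar> powr r) powr (1 / r)
     | _ \<Rightarrow> Max (range (\<lambda>i. \<bar>z $ i\<bar>)))"

definition l1_norm :: "real ^ 'n \<Rightarrow> real" where
  "l1_norm z = (\<Sum>i\<in>UNIV. \<bar>z $ i\<bar>)"

definition qexp :: "ereal \<Rightarrow> real" where
  "qexp q = (case q of ereal r \<Rightarrow> r / (r - 1) | _ \<Rightarrow> 1)"

definition sparsity_q :: "ereal \<Rightarrow> real ^ 'n \<Rightarrow> real" where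
  "sparsity_q q z = (l1_norm z / lq_norm q z) powr (qexp q)"

definition rho_qs :: "ereal \<Rightarrow> real \<Rightarrow> real ^ 'n ^ 'm \<Rightarrow> real" where
  "rho_qs q s A = (INF z \<in> {z. z \<noteq> 0 \<and> sparsity_q q z \<le> s}. norm (A *v z) / lq_norm q z)"

definition k_sparse :: "nat \<Rightarrow> real ^ 'n \<Rightarrow> bool" where
  "k_sparse k x \<longleftrightarrow> card {i. x $ i \<noteq> 0} \<le> k"

end

theory Submission
  imports Defs
begin

lemma tpow: "0 \<le> t \<Longrightarrow> t \<le> 1 \<Longrightarrow> 1 \<le> (r::real) \<Longrightarrow> t powr r \<le> t"
  by (metis powr_one powr_mono')

lemma pw_convex: assumes r: "1 \<le> (r::real)" shows "convex_on {0..} (\<lambda>x::real. x powr r)"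
proof (rule convex_onI)
  fix t x y :: real assume t: "0 < t" "t < 1" and xy: "x \<in> {0..}" "y \<in> {0..}"
  show "((1 - t) *\<^sub>R x + t *\<^sub>R y) powr r \<le> (1 - t) * x powr r + t * y powr r"
  proof (cases "x = 0 \<or> y = 0")
    case False
    then show ?thesis using convex_onD[OF powr_convex[OF r], of t x y] t xy by auto
  next
    case True
    then show ?thesis
    proof
      assume x: "x = 0"
      have "(t * y) powr r = t powr r * y powr r" using t xy by (simp add: powr_mult)
      also have "\<dots> \<le> t * y powr r" using tpow[of t r] t r by (intro mult_right_mono) auto
      finally show ?thesis using x r by simp
    next
      assume y: "y = 0"
      have "((1-t) * x) powr r = (1-t) powr r * x powr r" using t xy by (simp add: powr_mult)
      also have "\<dots> \<le> (1-t) * x powr r" using tpow[of "1-t" r] t r by (intro mult_right_mono) auto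
      finally show ?thesis using y r by simp
    qed
  qed
qed (simp add: convex_real_interval)

lemma holder_card:
  fixes a :: "'a \<Rightarrow> real"
  assumes S: "finite S" and a: "\<And>i. i \<in> S \<Longrightarrow> a i \<ge> 0" and r: "1 \<le> r"
  shows "sum a S \<le> real (card S) powr (1 - 1/r) * (\<Sum>i\<in>S. a i powr r) powr (1/r)"
proof (cases "S = {}")
  case True then show ?thesis by simp
next
  case False
  define n where "n = real (card S)"
  have n: "n > 0" using S False by (simp add: n_def card_gt_0_iff)
  have J: "(\<Sum>i\<in>S. (1/n) *\<^sub>R a i) powr r \<le> (\<Sum>i\<in>S. (1/n) * a i powr r)"
    using S False n a
    by (intro convex_on_sum[OF _ _ pw_convex[OF r]]) (auto simp: n_def)
  have e1: "(\<Sum>i\<in>S. (1/n) *\<^sub>R a i) = sum a S / n" by (simp add: sum_divide_distrib)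
  have e2: "(\<Sum>i\<in>S. (1/n) * a i powr r) = (\<Sum>i\<in>S. a i powr r) / n" by (simp add: sum_divide_distrib)
  have s0: "sum a S \<ge> 0" using a by (simp add: sum_nonneg)
  have P0: "(\<Sum>i\<in>S. a i powr r) \<ge> 0" by (simp add: sum_nonneg)
  have "(sum a S / n) powr r \<le> (\<Sum>i\<in>S. a i powr r) / n" using J e1 e2 by simp
  hence "((sum a S / n) powr r) powr (1/r) \<le> ((\<Sum>i\<in>S. a i powr r) / n) powr (1/r)"
    using r by (intro powr_mono2) auto
  hence "sum a S / n \<le> (\<Sum>i\<in>S. a i powr r) powr (1/r) / n powr (1/r)"
    using r s0 n P0 by (simp add: powr_powr powr_divide)
  hence "sum a S \<le> n * ((\<Sum>i\<in>S. a i powr r) powr (1/r) / n powr (1/r))"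
    using n by (simp add: divide_simps mult.commute)
  also have "\<dots> = n powr (1 - 1/r) * (\<Sum>i\<in>S. a i powr r) powr (1/r)"
    using n by (simp add: powr_diff)
  finally show ?thesis by (simp add: n_def)
qed

definition psum :: "real \<Rightarrow> real ^ 'n \<Rightarrow> real" where
  "psum r z = (\<Sum>i\<in>UNIV. \<bar>z $ i\<bar> powr r)"

lemma psum_nonneg: "psum r z \<ge> 0"
  by (simp add: psum_def sum_nonneg)

lemma psum_scale: "psum r (c *\<^sub>R z) = \<bar>c\<bar> powr r * psum r z"
  by (simp add: psum_def sum_distrib_left abs_mult powr_mult)

lemma psum_pos: assumes "z \<noteq> 0" shows "psum r z > 0"
proof -
  obtain i where i: "z $ i \<noteq> 0" using assms by (auto simp: vec_eq_iff)
  have "0 < \<bar>z $ i\<bar> powr r" using i by simp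
  also have "\<dots> \<le> psum r z" unfolding psum_def by (rule member_le_sum) auto
  finally show ?thesis .
qed

lemma psum_convex:
  assumes r: "1 \<le> r" and t: "0 \<le> t" "t \<le> 1"
  shows "psum r ((1-t) *\<^sub>R u + t *\<^sub>R v) \<le> (1-t) * psum r u + t * psum r v"
proof -
  have "psum r ((1-t) *\<^sub>R u + t *\<^sub>R v) \<le> (\<Sum>i\<in>UNIV. (1-t) * \<bar>u$i\<bar> powr r + t * \<bar>v$i\<bar> powr r)"
    unfolding psum_def
  proof (rule sum_mono)
    fix i
    have "\<bar>((1-t) *\<^sub>R u + t *\<^sub>R v) $ i\<bar> \<le> (1-t) * \<bar>u$i\<bar> + t * \<bar>v$i\<bar>"
    proof -
      have "\<bar>((1-t) *\<^sub>R u + t *\<^sub>R v) $ i\<bar> = \<bar>(1-t) * u$i + t * v$i\<bar>" by simp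
      also have "\<dots> \<le> \<bar>(1-t) * u$i\<bar> + \<bar>t * v$i\<bar>" by (rule abs_triangle_ineq)
      also have "\<dots> = (1-t) * \<bar>u$i\<bar> + t * \<bar>v$i\<bar>" using t by (simp add: abs_mult)
      finally show ?thesis .
    qed
    hence "\<bar>((1-t) *\<^sub>R u + t *\<^sub>R v) $ i\<bar> powr r \<le> ((1-t) * \<bar>u$i\<bar> + t * \<bar>v$i\<bar>) powr r"
      using r by (intro powr_mono2) auto
    also have "\<dots> \<le> (1-t) * \<bar>u$i\<bar> powr r + t * \<bar>v$i\<bar> powr r"
      using convex_onD[OF pw_convex[OF r], of t "\<bar>u$i\<bar>" "\<bar>v$i\<bar>"] t by simp
    finally show "\<bar>((1-t) *\<^sub>R u + t *\<^sub>R v) $ i\<bar> powr r \<le> (1-t) * \<bar>u$i\<bar> powr r + t * \<bar>v$i\<bar> powr r" .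
  qed
  also have "\<dots> = (1-t) * psum r u + t * psum r v"
    by (simp add: psum_def sum.distrib sum_distrib_left)
  finally show ?thesis .
qed

definition pnorm :: "real \<Rightarrow> real ^ 'n \<Rightarrow> real" where
  "pnorm r z = psum r z powr (1/r)"

lemma pnorm_nonneg: "pnorm r z \<ge> 0" by (simp add: pnorm_def)

lemma pnorm_pos: "z \<noteq> 0 \<Longrightarrow> pnorm r z > 0"
  using psum_pos[of z r] by (simp add: pnorm_def)

lemma pnorm_pow: "1 \<le> r \<Longrightarrow> pnorm r z powr r = psum r z"
  using psum_nonneg[of r z] by (simp add: pnorm_def powr_powr)

lemma pnorm_scale: "1 \<le> r \<Longrightarrow> pnorm r (c *\<^sub>R z) = \<bar>c\<bar> * pnorm r z"
  by (simp add: pnorm_def psum_scale powr_mult psum_nonneg powr_powr)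

lemma minkowski:
  assumes r: "1 \<le> r"
  shows "pnorm r (u + v) \<le> pnorm r u + pnorm r v"
proof (cases "u = 0 \<or> v = 0")
  case True then show ?thesis by (auto simp: pnorm_nonneg)
next
  case False
  define a where "a = pnorm r u"
  define b where "b = pnorm r v"
  have a: "a > 0" unfolding a_def using False by (intro pnorm_pos) simp
  have b: "b > 0" unfolding b_def using False by (intro pnorm_pos) simp
  define t where "t = b / (a + b)"
  have t: "0 \<le> t" "t \<le> 1" using a b by (auto simp: t_def)
  have pu: "psum r ((1/a) *\<^sub>R u) = 1"
    using pnorm_scale[OF r, of "1/a" u] pnorm_pow[OF r, of "(1/a) *\<^sub>R u"] a a_def by simp
  have pv: "psum r ((1/b) *\<^sub>R v) = 1"
    using pnorm_scale[OF r, of "1/b" v] pnorm_pow[OF r, of "(1/b) *\<^sub>R v"] b b_def by simp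
  have c1: "(1-t) * (1/a) = 1/(a+b)" using a b unfolding t_def by (simp add: divide_simps)
  have c2: "t * (1/b) = 1/(a+b)" using a b unfolding t_def by (simp add: divide_simps)
  have eq: "(1-t) *\<^sub>R ((1/a) *\<^sub>R u) + t *\<^sub>R ((1/b) *\<^sub>R v) = (1/(a+b)) *\<^sub>R (u + v)"
    by (simp only: scaleR_scaleR c1 c2 scaleR_add_right)
  have "psum r ((1/(a+b)) *\<^sub>R (u + v)) \<le> 1"
    using psum_convex[OF r t, of "(1/a) *\<^sub>R u" "(1/b) *\<^sub>R v"] pu pv eq by simp
  hence "psum r ((1/(a+b)) *\<^sub>R (u + v)) powr (1/r) \<le> 1 powr (1/r)"
    using r psum_nonneg by (intro powr_mono2) auto
  hence "pnorm r ((1/(a+b)) *\<^sub>R (u + v)) \<le> 1" by (simp add: pnorm_def)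
  hence "pnorm r (u + v) / (a + b) \<le> 1" using pnorm_scale[OF r, of "1/(a+b)" "u+v"] a b by simp
  thus ?thesis using a b by (simp add: a_def b_def)
qed

lemma absdiff: "\<bar>a\<bar> - \<bar>b\<bar> \<le> \<bar>a + (b::real)\<bar>" by arith

definition mnorm :: "real ^ 'n \<Rightarrow> real" where
  "mnorm z = Max (range (\<lambda>i. \<bar>z $ i\<bar>))"

lemma mnorm_ge: "\<bar>z $ i\<bar> \<le> mnorm z"
  unfolding mnorm_def by (rule Max_ge) auto

lemma mnorm_ex: "\<exists>j. mnorm z = \<bar>z $ j\<bar>"
proof -
  have "mnorm z \<in> range (\<lambda>i. \<bar>z $ i\<bar>)" unfolding mnorm_def by (rule Max_in) auto
  thus ?thesis by auto
qed

lemma mnorm_nonneg: "mnorm z \<ge> 0"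
  using mnorm_ge[of z] abs_ge_zero order_trans by blast

lemma mnorm_pos: assumes "z \<noteq> 0" shows "mnorm z > 0"
proof -
  obtain i where i: "z $ i \<noteq> 0" using assms by (auto simp: vec_eq_iff)
  show ?thesis using mnorm_ge[of z i] i by simp
qed

lemma mnorm_tri: "mnorm (u + v) \<le> mnorm u + mnorm v"
proof -
  obtain j where j: "mnorm (u + v) = \<bar>(u + v) $ j\<bar>" using mnorm_ex by blast
  have "\<bar>(u + v) $ j\<bar> \<le> \<bar>u $ j\<bar> + \<bar>v $ j\<bar>" by (simp add: abs_triangle_ineq)
  thus ?thesis using j mnorm_ge[of u j] mnorm_ge[of v j] by linarith
qed

lemma mnorm_sum: "(\<Sum>i\<in>S. \<bar>z $ i\<bar>) \<le> real (card S) * mnorm z"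
  using sum_bounded_above[of S "\<lambda>i. \<bar>z $ i\<bar>" "mnorm z"] mnorm_ge by auto

lemma main_abstract:
  fixes N :: "real ^ 'n \<Rightarrow> real" and A :: "real ^ 'n ^ 'm" and x :: "real ^ 'n"
  assumes pos: "\<And>z. z \<noteq> 0 \<Longrightarrow> N z > 0"
    and tri: "\<And>u v. N (u + v) \<le> N u + N v"
    and hold: "\<And>z. (\<Sum>i\<in>{i. x $ i \<noteq> 0}. \<bar>z $ i\<bar>) \<le> c * N z"
    and x0: "x \<noteq> 0"
    and null: "\<And>h. h \<noteq> 0 \<Longrightarrow> A *v h = 0 \<Longrightarrow> 3 * c * N h < l1_norm h"
  shows "{z. z \<noteq> 0 \<and> A *v z = A *v x \<and>
             (\<forall>w. w \<noteq> 0 \<and> A *v w = A *v x \<longrightarrow>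
                  l1_norm z / N z \<le> l1_norm w / N w)} = {x}"
proof -
  define S where "S = {i. x $ i \<noteq> 0}"
  have split: "\<And>f::'n \<Rightarrow> real. sum f UNIV = sum f S + sum f (- S)"
    using sum.subset_diff[of S UNIV] by (simp add: Compl_eq_Diff_UNIV add.commute)
  have xoff: "\<And>i. i \<in> - S \<Longrightarrow> x $ i = 0" by (simp add: S_def)
  have a: "N x > 0" using pos x0 by blast
  have l1x: "l1_norm x = (\<Sum>i\<in>S. \<bar>x $ i\<bar>)"
    unfolding l1_norm_def using split[of "\<lambda>i. \<bar>x $ i\<bar>"] xoff by simp
  have key: "w = x" if w0: "w \<noteq> 0" and Aw: "A *v w = A *v x"
      and rat: "l1_norm w / N w \<le> l1_norm x / N x" for w
  proof (rule ccontr)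
    assume ne: "w \<noteq> x"
    define h where "h = w - x"
    have h0: "h \<noteq> 0" using ne by (simp add: h_def)
    have Ah: "A *v h = 0" using Aw by (simp add: h_def matrix_vector_mult_diff_distrib)
    have wxh: "w = x + h" by (simp add: h_def)
    define t where "t = N h"
    have t: "t > 0" using pos h0 by (simp add: t_def)
    define hS where "hS = (\<Sum>i\<in>S. \<bar>h $ i\<bar>)"
    define hC where "hC = (\<Sum>i\<in>-S. \<bar>h $ i\<bar>)"
    have l1h: "l1_norm h = hS + hC" unfolding l1_norm_def hS_def hC_def by (rule split)
    have hS: "hS \<le> c * t" unfolding hS_def t_def S_def by (rule hold)
    have l1xc: "l1_norm x \<le> c * N x" unfolding l1x S_def by (rule hold)
    have "(\<Sum>i\<in>S. \<bar>x $ i\<bar> - \<bar>h $ i\<bar>) \<le> (\<Sum>i\<in>S. \<bar>w $ i\<bar>)"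
      by (rule sum_mono) (simp add: wxh absdiff)
    hence wS: "l1_norm x - hS \<le> (\<Sum>i\<in>S. \<bar>w $ i\<bar>)"
      by (simp add: sum_subtractf l1x hS_def)
    have wC: "(\<Sum>i\<in>-S. \<bar>w $ i\<bar>) = hC"
      unfolding hC_def by (rule sum.cong) (auto simp: wxh xoff)
    have l1w: "l1_norm x - hS + hC \<le> l1_norm w"
      using split[of "\<lambda>i. \<bar>w $ i\<bar>"] wS wC unfolding l1_norm_def[of w] by linarith
    have Nw: "N w > 0" using pos w0 by blast
    have Nwle: "N w \<le> N x + t" unfolding t_def wxh by (rule tri)
    have "l1_norm w \<le> (l1_norm x / N x) * N w" using rat Nw by (subst (asm) pos_divide_le_eq) auto
    also have "\<dots> \<le> (l1_norm x / N x) * (N x + t)"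
      using Nwle a l1xc by (intro mult_left_mono) (auto simp: l1_norm_def sum_nonneg)
    also have "\<dots> = l1_norm x + (l1_norm x / N x) * t" using a by (simp add: field_simps)
    also have "\<dots> \<le> l1_norm x + c * t"
    proof -
      have "l1_norm x / N x \<le> c" using l1xc a by (simp add: divide_simps)
      thus ?thesis using mult_right_mono[of "l1_norm x / N x" c t] t by linarith
    qed
    finally have "l1_norm w \<le> l1_norm x + c * t" .
    hence "l1_norm h \<le> 3 * c * t" using l1h l1w hS by linarith
    thus False using null[OF h0 Ah] by (simp add: t_def)
  qed
  show ?thesis
  proof (intro equalityI subsetI)
    fix z assume "z \<in> {z. z \<noteq> 0 \<and> A *v z = A *v x \<and>
             (\<forall>w. w \<noteq> 0 \<and> A *v w = A *v x \<longrightarrow> l1_norm z / N z \<le> l1_norm w / N w)}"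
    then show "z \<in> {x}" using key x0 by auto
  next
    fix z assume "z \<in> {x}"
    then have zx: "z = x" by simp
    have "l1_norm x / N x \<le> l1_norm w / N w" if "w \<noteq> 0" "A *v w = A *v x" for w
    proof (rule ccontr)
      assume nt: "\<not> l1_norm x / N x \<le> l1_norm w / N w"
      hence "w = x" using key that by auto
      thus False using nt by simp
    qed
    thus "z \<in> {z. z \<noteq> 0 \<and> A *v z = A *v x \<and>
             (\<forall>w. w \<noteq> 0 \<and> A *v w = A *v x \<longrightarrow> l1_norm z / N z \<le> l1_norm w / N w)}"
      using zx x0 by auto
  qed
qed

lemma rho_null:
  fixes A :: "real ^ 'n ^ 'm" and h :: "real ^ 'n"
  assumes rho: "rho_qs q s A > 0" and nn: "\<And>z::real ^ 'n. lq_norm q z \<ge> 0"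
    and h0: "h \<noteq> 0" and Ah: "A *v h = 0"
  shows "sparsity_q q h > s"
proof (rule ccontr)
  assume "\<not> sparsity_q q h > s"
  hence hin: "h \<in> {z. z \<noteq> 0 \<and> sparsity_q q z \<le> s}" using h0 by auto
  have bdd: "bdd_below ((\<lambda>z. norm (A *v z) / lq_norm q z) ` {z. z \<noteq> 0 \<and> sparsity_q q z \<le> s})"
    by (rule bdd_belowI[where m=0]) (auto intro!: divide_nonneg_nonneg nn)
  have "rho_qs q s A \<le> norm (A *v h) / lq_norm q h"
    unfolding rho_qs_def by (rule cINF_lower[OF bdd hin])
  thus False using Ah rho by simp
qed

lemma lq_ereal: "lq_norm (ereal r) = pnorm r"
  by (rule ext) (simp add: lq_norm_def pnorm_def psum_def)

lemma lq_inf: "lq_norm \<infinity> = mnorm"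
  by (rule ext) (simp add: lq_norm_def mnorm_def)

theorem corollary1:
  fixes A :: "real ^ 'n ^ 'm" and x :: "real ^ 'n" and k :: nat and q :: ereal
  assumes "x \<noteq> 0" and "k_sparse k x" and "1 < q"
    and "rho_qs q (3 powr (qexp q) * real k) A > 0"
  shows "{z. z \<noteq> 0 \<and> A *v z = A *v x \<and>
             (\<forall>w. w \<noteq> 0 \<and> A *v w = A *v x \<longrightarrow>
                  l1_norm z / lq_norm q z \<le> l1_norm w / lq_norm q w)} = {x}"
proof -
  note x0 = assms(1)
  define S where "S = {i. x $ i \<noteq> 0}"
  have cardS: "real (card S) \<le> real k" using assms(2) by (simp add: k_sparse_def S_def)
  have l1nn: "\<And>z. l1_norm z \<ge> 0" by (simp add: l1_norm_def sum_nonneg)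
  show ?thesis
  proof (cases q)
    case (real r)
    have r: "r > 1" using assms(3) real by simp
    define e where "e = r / (r - 1)"
    have qe: "qexp (ereal r) = e" by (simp add: qexp_def e_def)
    define c where "c = real k powr (1 - 1/r)"
    have c0: "c \<ge> 0" by (simp add: c_def)
    have ce: "c powr e = real k"
    proof -
      have "(1 - 1/r) * e = 1" using r by (simp add: e_def field_simps)
      thus ?thesis by (simp add: c_def powr_powr)
    qed
    have hold: "(\<Sum>i\<in>S. \<bar>z $ i\<bar>) \<le> c * pnorm r z" for z
    proof -
      have "(\<Sum>i\<in>S. \<bar>z $ i\<bar>) \<le> real (card S) powr (1 - 1/r) * (\<Sum>i\<in>S. \<bar>z $ i\<bar> powr r) powr (1/r)"
        using r by (intro holder_card) auto
      also have "\<dots> \<le> c * pnorm r z"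
        unfolding c_def pnorm_def psum_def
      proof (intro mult_mono powr_mono2)
        show "(\<Sum>i\<in>S. \<bar>z $ i\<bar> powr r) \<le> (\<Sum>i\<in>UNIV. \<bar>z $ i\<bar> powr r)"
          by (rule sum_mono2) auto
      qed (use r cardS in \<open>auto simp: sum_nonneg\<close>)
      finally show ?thesis .
    qed
    have null: "3 * c * pnorm r h < l1_norm h" if h0: "h \<noteq> 0" and Ah: "A *v h = 0" for h
    proof (rule ccontr)
      assume "\<not> 3 * c * pnorm r h < l1_norm h"
      hence le: "l1_norm h / pnorm r h \<le> 3 * c" using pnorm_pos[OF h0, of r]
        by (simp add: pos_divide_le_eq)
      have "sparsity_q q h > 3 powr (qexp q) * real k"
        by (rule rho_null[OF assms(4) _ h0 Ah]) (simp add: real lq_ereal pnorm_nonneg)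
      hence "(l1_norm h / pnorm r h) powr e > 3 powr e * real k"
        by (simp add: sparsity_q_def qe real lq_ereal)
      moreover have "(l1_norm h / pnorm r h) powr e \<le> (3 * c) powr e"
        using le r l1nn pnorm_nonneg by (intro powr_mono2) (auto simp: e_def intro!: divide_nonneg_nonneg)
      moreover have "(3 * c) powr e = 3 powr e * real k" using c0 ce by (simp add: powr_mult)
      ultimately show False by simp
    qed
    have "{z. z \<noteq> 0 \<and> A *v z = A *v x \<and>
             (\<forall>w. w \<noteq> 0 \<and> A *v w = A *v x \<longrightarrow>
                  l1_norm z / pnorm r z \<le> l1_norm w / pnorm r w)} = {x}"
      by (rule main_abstract[where c=c]) (auto intro: pnorm_pos minkowski hold[unfolded S_def] null simp: x0 less_imp_le[OF r])
    thus ?thesis by (simp add: real lq_ereal)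
  next
    case PInf
    have qe: "qexp \<infinity> = 1" by (simp add: qexp_def)
    have hold: "(\<Sum>i\<in>S. \<bar>z $ i\<bar>) \<le> real k * mnorm z" for z
      using mnorm_sum[of z S] cardS mnorm_nonneg[of z] by (meson mult_right_mono order_trans)
    have null: "3 * real k * mnorm h < l1_norm h" if h0: "h \<noteq> 0" and Ah: "A *v h = 0" for h
    proof (rule ccontr)
      assume "\<not> 3 * real k * mnorm h < l1_norm h"
      hence le: "l1_norm h / mnorm h \<le> 3 * real k" using mnorm_pos[OF h0]
        by (simp add: pos_divide_le_eq)
      have "sparsity_q q h > 3 powr (qexp q) * real k"
        by (rule rho_null[OF assms(4) _ h0 Ah]) (simp add: PInf lq_inf mnorm_nonneg)
      hence "l1_norm h / mnorm h > 3 * real k"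
        using l1nn[of h] mnorm_nonneg[of h] by (simp add: sparsity_q_def qe PInf lq_inf)
      thus False using le by simp
    qed
    have "{z. z \<noteq> 0 \<and> A *v z = A *v x \<and>
             (\<forall>w. w \<noteq> 0 \<and> A *v w = A *v x \<longrightarrow>
                  l1_norm z / mnorm z \<le> l1_norm w / mnorm w)} = {x}"
      by (rule main_abstract[where c="real k"]) (auto intro: mnorm_pos mnorm_tri hold[unfolded S_def] null simp: x0)
    thus ?thesis by (simp add: PInf lq_inf)
  next
    case MInf
    then show ?thesis using assms(3) by simp
  qed
qed

end
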